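(* Let $f_\bullet\colon X\hookrightarrow Z$ be an injective map of sets between finite metric spaces (not necessarily non-expansive), $V=\mathrm{PH}_0(X)$, $U=\mathrm{PH}_0(Z)$, and $f_0\colon V_0\to U_0$ the induced linear map. Then $\mathcal{M}^0_f$ induces an injection $\sigma^f\colon\mathrm{Rep}\,\mathcal{B}(V)\hookrightarrow\mathrm{Rep}\,\mathcal{B}(U)$; that is, $\sum_b\mathcal{M}^0_f(a,b)=m^V(a)$ for every $a\in S^V$ and $\sum_a \mathcal{M}^0_f(a,b)\le m^U(b)$ for every $b\in S^U$, so that there is an injection matching exactly $\mathcal{M}^0_f(a,b)$ copies of $[0,a)$ to copies of $[0,b)$ for all $a,b$.
   Context: All vector spaces are over $\mathbb{Z}_2$. For a finite metric space $X$, $\mathrm{VR}_r(X)$ is the graph on $X$ with edges $[x,y]$ for $d^X(x,y)\le r$, and $\mathrm{PH}_0(X)$ is the persistence module $r\mapsto H_0(\mathrm{VR}_r(X))$ (free on connected components) with structure maps $\rho_{rs}$ induced by inclusion; $V_0$ has basis $X$ and $f_0$ sends $x$ to $f_\bullet(x)$. The barcode $\mathcal{B}(V)=(S^V,m^V)$ is the multiset of finite death values $b$ of bars $[0,b)$ (infinite bar excluded). $\mathrm{Rep}(S,m)=\{(s,\ell):s\in S, 1\le\ell\le m(s)\}$. With $\ker^+_b(U)=\ker(\rho^U_{0b})$ and $\ker^-_b(U)=\bigcup_{0\le r<b}\ker(\rho^U_{0r})$, $\mathcal{M}^0_f(a,b)=\dim\frac{f_0(\ker^+_a V)\cap \ker^+_b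 U}{f_0(\ker^-_a V)\cap\ker^+_b U+f_0(\ker^+_a V)\cap \ker^-_b U}$ for $a,b>0$. *)

theory Defs
  imports "HOL-Analysis.Abstract_Metric_Spaces" "HOL-Library.Z2" "HOL-Library.Function_Algebras"
begin

text \<open>Vector spaces over Z_2: vectors are functions into bit with pointwise operations.
  V_0 (chain space of X) = functions X -> Z_2 vanishing outside X, with basis the indicators of points.\<close>

definition scaleZ2 :: "bit \<Rightarrow> ('a \<Rightarrow> bit) \<Rightarrow> ('a \<Rightarrow> bit)" where
  "scaleZ2 c v = (\<lambda>x. c * v x)"

definition dimZ2 :: "('a \<Rightarrow> bit) set \<Rightarrow> nat" where
  "dimZ2 W = vector_space.dim scaleZ2 W"

definition spanZ2 :: "('a \<Rightarrow> bit) set \<Rightarrow> ('a \<Rightarrow> bit) set" where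
  "spanZ2 W = module.span scaleZ2 W"

definition quot_dim :: "('a \<Rightarrow> bit) set \<Rightarrow> ('a \<Rightarrow> bit) set \<Rightarrow> nat" where
  "quot_dim W1 W2 = dimZ2 W1 - dimZ2 W2"

definition chains0 :: "'a set \<Rightarrow> ('a \<Rightarrow> bit) set" where
  "chains0 X = {v. \<forall>x. x \<notin> X \<longrightarrow> v x = 0}"

text \<open>Connectivity in the Vietoris-Rips graph VR_r(X): edges [x,y] with d x y <= r.\<close>
definition vr_conn :: "'a set \<Rightarrow> ('a \<Rightarrow> 'a \<Rightarrow> real) \<Rightarrow> real \<Rightarrow> 'a \<Rightarrow> 'a \<Rightarrow> bool" where
  "vr_conn X d r = (\<lambda>x y. x \<in> X \<and> y \<in> X \<and> d x y \<le> r)\<^sup>*\<^sup>*"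

definition vr_components :: "'a set \<Rightarrow> ('a \<Rightarrow> 'a \<Rightarrow> real) \<Rightarrow> real \<Rightarrow> 'a set set" where
  "vr_components X d r = X // {(x, y). vr_conn X d r x y}"

text \<open>rho_{0r} : V_0 -> H_0(VR_r(X)) (free on components), sending x to its component.\<close>
definition rho0 :: "'a set \<Rightarrow> ('a \<Rightarrow> 'a \<Rightarrow> real) \<Rightarrow> real \<Rightarrow> ('a \<Rightarrow> bit) \<Rightarrow> ('a set \<Rightarrow> bit)" where
  "rho0 X d r v = (\<lambda>C. if C \<in> vr_components X d r then (\<Sum>x\<in>C. v x) else 0)"

definition ker_plus :: "'a set \<Rightarrow> ('a \<Rightarrow> 'a \<Rightarrow> real) \<Rightarrow> real \<Rightarrow> ('a \<Rightarrow> bit) set" where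
  "ker_plus X d b = {v \<in> chains0 X. rho0 X d b v = 0}"

definition ker_minus :: "'a set \<Rightarrow> ('a \<Rightarrow> 'a \<Rightarrow> real) \<Rightarrow> real \<Rightarrow> ('a \<Rightarrow> bit) set" where
  "ker_minus X d b = (\<Union>r\<in>{0..<b}. ker_plus X d r)"

text \<open>Multiplicity of bars [0,b) in the barcode of PH_0(X):
  the drop in rank of rho_{0r} at r = b, i.e. dim ker^+_b - dim ker^-_b.\<close>
definition bar_mult :: "'a set \<Rightarrow> ('a \<Rightarrow> 'a \<Rightarrow> real) \<Rightarrow> real \<Rightarrow> nat" where
  "bar_mult X d b = (if b > 0 then dimZ2 (ker_plus X d b) - dimZ2 (ker_minus X d b) else 0)"

definition bar_set :: "'a set \<Rightarrow> ('a \<Rightarrow> 'a \<Rightarrow> real) \<Rightarrow> real set" where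
  "bar_set X d = {b. 0 < b \<and> 0 < bar_mult X d b}"

definition Rep :: "real set \<Rightarrow> (real \<Rightarrow> nat) \<Rightarrow> (real \<times> nat) set" where
  "Rep S m = {(s, l). s \<in> S \<and> 1 \<le> l \<and> l \<le> m s}"

definition f0 :: "'a set \<Rightarrow> ('a \<Rightarrow> 'b) \<Rightarrow> ('a \<Rightarrow> bit) \<Rightarrow> ('b \<Rightarrow> bit)" where
  "f0 X f v = (\<lambda>z. \<Sum>x\<in>{x\<in>X. f x = z}. v x)"

definition Mf :: "'a set \<Rightarrow> ('a \<Rightarrow> 'a \<Rightarrow> real) \<Rightarrow> 'b set \<Rightarrow> ('b \<Rightarrow> 'b \<Rightarrow> real)
    \<Rightarrow> ('a \<Rightarrow> 'b) \<Rightarrow> real \<Rightarrow> real \<Rightarrow> nat" where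
  "Mf X dX Z dZ f a b =
     quot_dim (f0 X f ` ker_plus X dX a \<inter> ker_plus Z dZ b)
              (spanZ2 ((f0 X f ` ker_minus X dX a \<inter> ker_plus Z dZ b)
                       \<union> (f0 X f ` ker_plus X dX a \<inter> ker_minus Z dZ b)))"

end

theory Submission
  imports Defs
begin

lemma vsZ2: "vector_space (scaleZ2 :: bit \<Rightarrow> ('a \<Rightarrow> bit) \<Rightarrow> ('a \<Rightarrow> bit))"
  by unfold_locales (auto simp: scaleZ2_def fun_eq_iff algebra_simps)

global_interpretation Z: vector_space "scaleZ2 :: bit \<Rightarrow> ('a \<Rightarrow> bit) \<Rightarrow> ('a \<Rightarrow> bit)"
  by (rule vsZ2)

lemma dimZ2_eq: "dimZ2 = Z.dim" by (simp add: dimZ2_def[abs_def])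
lemma spanZ2_eq: "spanZ2 = Z.span" by (simp add: spanZ2_def[abs_def])

lemma extend_basis:
  assumes "B \<subseteq> T" "Z.independent B"
  obtains B' where "B \<subseteq> B'" "B' \<subseteq> T" "Z.independent B'" "T \<subseteq> Z.span B'" "card B' = Z.dim T"
proof -
  obtain B' where B': "B \<subseteq> B'" "B' \<subseteq> T" "Z.independent B'" "T \<subseteq> Z.span B'"
    using Z.maximal_independent_subset_extend[OF assms] by blast
  have "card B' = Z.dim T" using B' Z.basis_card_eq_dim by blast
  with B' that show ?thesis by blast
qed

lemma dim_mono_fin:
  assumes "S \<subseteq> T" "finite T"
  shows "Z.dim S \<le> Z.dim T"
proof -
  obtain B where B: "B \<subseteq> S" "Z.independent B" "S \<subseteq> Z.span B" "card B = Z.dim S"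
    by (rule Z.basis_exists)
  obtain B' where B': "B \<subseteq> B'" "B' \<subseteq> T" "card B' = Z.dim T"
    using extend_basis[of B T] B assms by (metis order_trans)
  have "card B \<le> card B'" using B' assms by (meson card_mono finite_subset)
  then show ?thesis using B B' by simp
qed

lemma grassmann:
  assumes A: "Z.subspace A" and B: "Z.subspace B" and fA: "finite A" and fB: "finite B"
  shows "Z.dim (Z.span (A \<union> B)) + Z.dim (A \<inter> B) = Z.dim A + Z.dim B"
proof -
  obtain C where C: "C \<subseteq> A \<inter> B" "Z.independent C" "A \<inter> B \<subseteq> Z.span C" "card C = Z.dim (A \<inter> B)"
    by (rule Z.basis_exists)
  obtain CA where CA: "C \<subseteq> CA" "CA \<subseteq> A" "Z.independent CA" "A \<subseteq> Z.span CA" "card CA = Z.dim A"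
    using extend_basis[of C A] C by blast
  obtain CB where CB: "C \<subseteq> CB" "CB \<subseteq> B" "Z.independent CB" "B \<subseteq> Z.span CB" "card CB = Z.dim B"
    using extend_basis[of C B] C by blast
  have fCA: "finite CA" using CA fA finite_subset by blast
  have fCB: "finite CB" using CB fB finite_subset by blast
  have spCA: "Z.span CA \<subseteq> A" using CA A Z.span_minimal by blast
  have spCB: "Z.span CB \<subseteq> B" using CB B Z.span_minimal by blast
  have int: "CA \<inter> CB = C"
  proof
    show "CA \<inter> CB \<subseteq> C"
    proof
      fix x assume x: "x \<in> CA \<inter> CB"
      show "x \<in> C"
      proof (rule ccontr)
        assume "x \<notin> C"
        have "x \<in> Z.span C" using x CA CB C by blast
        moreover have "Z.span C \<subseteq> Z.span (CA - {x})" using CA \<open>x \<notin> C\<close> by (intro Z.span_mono) blast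
        ultimately have "Z.dependent CA" using x Z.dependent_def by blast
        with CA show False by blast
      qed
    qed
  qed (use CA CB in blast)
  have indep: "Z.independent (CA \<union> T)" if "T \<subseteq> CB" for T
  proof -
    have "finite T" using that fCB finite_subset by blast
    then show ?thesis using that
    proof (induction T rule: finite_induct)
      case empty then show ?case using CA by simp
    next
      case (insert x T)
      then have IH: "Z.independent (CA \<union> T)" and xCB: "x \<in> CB" by auto
      show ?case
      proof (cases "x \<in> CA")
        case True
        then have "CA \<union> insert x T = CA \<union> T" by blast
        then show ?thesis using IH by simp
      next
        case False
        have "x \<notin> Z.span (CA \<union> T)"
        proof
          assume "x \<in> Z.span (CA \<union> T)"
          then obtain a t where at: "x = a + t" "a \<in> Z.span CA" "t \<in> Z.span T"
            unfolding Z.span_Un by blast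
          have "t \<in> Z.span CB" using at insert.prems Z.span_mono by blast
          moreover have "x \<in> Z.span CB" using xCB Z.span_base by blast
          ultimately have "x - t \<in> Z.span CB" using Z.span_diff by blast
          moreover have "a = x - t" using at(1) by simp
          ultimately have "a \<in> B" using spCB by blast
          moreover have "a \<in> A" using at spCA by blast
          ultimately have "a \<in> Z.span C" using C by blast
          then have "x \<in> Z.span (C \<union> T)" using at
            unfolding Z.span_Un by blast
          moreover have "C \<union> T \<subseteq> CB - {x}" using CB CA False insert by blast
          ultimately have "x \<in> Z.span (CB - {x})" using Z.span_mono by blast
          then have "Z.dependent CB" using xCB Z.dependent_def by blast
          with CB show False by blast
        qed
        then show ?thesis using IH False Z.independent_insert[of x "CA \<union> T"] by simp
      qed
    qed
  qed
  have ind: "Z.independent (CA \<union> CB)" using indep by blast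
  have "Z.span (CA \<union> CB) = Z.span (A \<union> B)"
  proof
    show "Z.span (CA \<union> CB) \<subseteq> Z.span (A \<union> B)" using CA CB by (intro Z.span_mono) blast
    have "A \<subseteq> Z.span (CA \<union> CB)"
      using CA(4) Z.span_mono[of CA "CA \<union> CB"] by (meson Un_upper1 subset_trans)
    moreover have "B \<subseteq> Z.span (CA \<union> CB)"
      using CB(4) Z.span_mono[of CB "CA \<union> CB"] by (meson Un_upper2 subset_trans)
    ultimately have "A \<union> B \<subseteq> Z.span (CA \<union> CB)" by (rule Un_least)
    then show "Z.span (A \<union> B) \<subseteq> Z.span (CA \<union> CB)"
      by (rule Z.span_minimal[OF _ Z.subspace_span])
  qed
  then have "Z.dim (Z.span (A \<union> B)) = card (CA \<union> CB)"
    using Z.dim_eq_card[OF _ ind] by simp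
  moreover have "card (CA \<union> CB) + card (CA \<inter> CB) = card CA + card CB"
    using card_Un_Int[OF fCA fCB] by simp
  ultimately show ?thesis using int C CA CB by simp
qed

lemma core:
  assumes sP: "Z.subspace P" and sQ: "Z.subspace Q" and sK: "Z.subspace K" and sK': "Z.subspace K'"
    and fP: "finite P" and fK: "finite K" and QP: "Q \<subseteq> P" and KK: "K' \<subseteq> K"
  shows "int (quot_dim (P \<inter> K) (spanZ2 ((Q \<inter> K) \<union> (P \<inter> K')))) =
           int (Z.dim (P \<inter> K)) - int (Z.dim (Q \<inter> K)) - int (Z.dim (P \<inter> K')) + int (Z.dim (Q \<inter> K'))"
    and "quot_dim (P \<inter> K) (spanZ2 ((Q \<inter> K) \<union> (P \<inter> K'))) \<le> Z.dim K - Z.dim K'"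
    and "quot_dim (P \<inter> K) (spanZ2 ((Q \<inter> K) \<union> (P \<inter> K'))) \<le> Z.dim P - Z.dim Q"
proof -
  have fQ: "finite Q" using fP QP finite_subset by blast
  have fK': "finite K'" using fK KK finite_subset by blast
  have sPK: "Z.subspace (P \<inter> K)" using sP sK Z.subspace_inter by blast
  have sQK: "Z.subspace (Q \<inter> K)" using sQ sK Z.subspace_inter by blast
  have sPK': "Z.subspace (P \<inter> K')" using sP sK' Z.subspace_inter by blast
  have fPK: "finite (P \<inter> K)" using fP by simp
  have fQK: "finite (Q \<inter> K)" using fQ by simp
  have fPK': "finite (P \<inter> K')" using fP by simp
  define W where "W = Z.span ((Q \<inter> K) \<union> (P \<inter> K'))"
  have g1: "Z.dim W + Z.dim (Q \<inter> K') = Z.dim (Q \<inter> K) + Z.dim (P \<inter> K')"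
  proof -
    have "(Q \<inter> K) \<inter> (P \<inter> K') = Q \<inter> K'" using QP KK by blast
    then show ?thesis using grassmann[OF sQK sPK' fQK fPK'] unfolding W_def by simp
  qed
  have WPK: "W \<subseteq> P \<inter> K" unfolding W_def
    by (rule Z.span_minimal[OF _ sPK]) (use QP KK in blast)
  have dW: "Z.dim W \<le> Z.dim (P \<inter> K)" using dim_mono_fin[OF WPK fPK] .
  have q: "quot_dim (P \<inter> K) (spanZ2 ((Q \<inter> K) \<union> (P \<inter> K'))) = Z.dim (P \<inter> K) - Z.dim W"
    unfolding quot_dim_def dimZ2_eq spanZ2_eq W_def ..
  show "int (quot_dim (P \<inter> K) (spanZ2 ((Q \<inter> K) \<union> (P \<inter> K')))) =
           int (Z.dim (P \<inter> K)) - int (Z.dim (Q \<inter> K)) - int (Z.dim (P \<inter> K')) + int (Z.dim (Q \<inter> K'))"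
    using q dW g1 by linarith
  have g2: "Z.dim (Z.span ((P \<inter> K) \<union> K')) + Z.dim (P \<inter> K') = Z.dim (P \<inter> K) + Z.dim K'"
  proof -
    have "(P \<inter> K) \<inter> K' = P \<inter> K'" using KK by blast
    then show ?thesis using grassmann[OF sPK sK' fPK fK'] by simp
  qed
  have "Z.span ((P \<inter> K) \<union> K') \<subseteq> K" by (rule Z.span_minimal[OF _ sK]) (use KK in blast)
  then have d2: "Z.dim (Z.span ((P \<inter> K) \<union> K')) \<le> Z.dim K" using dim_mono_fin fK by blast
  have d3: "Z.dim (Q \<inter> K') \<le> Z.dim (Q \<inter> K)" using dim_mono_fin[of "Q \<inter> K'" "Q \<inter> K"] fQK KK by blast
  show "quot_dim (P \<inter> K) (spanZ2 ((Q \<inter> K) \<union> (P \<inter> K'))) \<le> Z.dim K - Z.dim K'"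
    using q g1 g2 d2 d3 dW by linarith
  have g3: "Z.dim (Z.span (Q \<union> (P \<inter> K))) + Z.dim (Q \<inter> K) = Z.dim Q + Z.dim (P \<inter> K)"
  proof -
    have "Q \<inter> (P \<inter> K) = Q \<inter> K" using QP by blast
    then show ?thesis using grassmann[OF sQ sPK fQ fPK] by simp
  qed
  have "Z.span (Q \<union> (P \<inter> K)) \<subseteq> P" by (rule Z.span_minimal[OF _ sP]) (use QP in blast)
  then have d4: "Z.dim (Z.span (Q \<union> (P \<inter> K))) \<le> Z.dim P" using dim_mono_fin fP by blast
  have d5: "Z.dim (Q \<inter> K') \<le> Z.dim (P \<inter> K')" using dim_mono_fin[of "Q \<inter> K'" "P \<inter> K'"] fPK' QP by blast
  show "quot_dim (P \<inter> K) (spanZ2 ((Q \<inter> K) \<union> (P \<inter> K'))) \<le> Z.dim P - Z.dim Q"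
    using q g1 g3 d4 d5 dW by linarith
qed

definition cls :: "'a set \<Rightarrow> ('a \<Rightarrow> 'a \<Rightarrow> real) \<Rightarrow> real \<Rightarrow> 'a \<Rightarrow> 'a set" where
  "cls X d r x = {y. vr_conn X d r x y}"

lemma conn_mem: "vr_conn X d r x y \<Longrightarrow> x \<in> X \<Longrightarrow> y \<in> X"
  unfolding vr_conn_def by (induction rule: rtranclp_induct) auto

lemma conn_refl: "vr_conn X d r x x"
  unfolding vr_conn_def by simp

lemma conn_trans: "vr_conn X d r x y \<Longrightarrow> vr_conn X d r y z \<Longrightarrow> vr_conn X d r x z"
  unfolding vr_conn_def by (rule rtranclp_trans)

lemma conn_sym:
  assumes "Metric_space X d" "vr_conn X d r x y" shows "vr_conn X d r y x"
  using assms(2) unfolding vr_conn_def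
proof (induction rule: rtranclp_induct)
  case base then show ?case by simp
next
  case (step y z)
  then have "(\<lambda>x y. x \<in> X \<and> y \<in> X \<and> d x y \<le> r) z y"
    using Metric_space.commute[OF assms(1)] by auto
  then show ?case using step(3) by (rule converse_rtranclp_into_rtranclp)
qed

lemma conn_mono: "r \<le> s \<Longrightarrow> vr_conn X d r x y \<Longrightarrow> vr_conn X d s x y"
  unfolding vr_conn_def
  by (rule rtranclp_mono[THEN predicate2D, rotated]) auto

lemma vr_components_eq: "vr_components X d r = cls X d r ` X"
  by (auto simp: vr_components_def quotient_def cls_def Image_def)

lemma cls_subset: "x \<in> X \<Longrightarrow> cls X d r x \<subseteq> X"
  using conn_mem by (auto simp: cls_def)

lemma kp_char: "ker_plus X d r = {v \<in> chains0 X. \<forall>x\<in>X. (\<Sum>y\<in>cls X d r x. v y) = 0}"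
  unfolding ker_plus_def rho0_def vr_components_eq
  by (auto simp: fun_eq_iff zero_fun_def)

lemma cls_eq:
  assumes ms: "Metric_space X d" and z1: "z \<in> cls X d r x" and z2: "z \<in> cls X d r y"
  shows "cls X d r x = cls X d r y"
proof -
  have "vr_conn X d r x z" using z1 unfolding cls_def by simp
  moreover have "vr_conn X d r z y" using z2 conn_sym[OF ms] unfolding cls_def by simp
  ultimately have xy: "vr_conn X d r x y" by (rule conn_trans)
  then have yx: "vr_conn X d r y x" by (rule conn_sym[OF ms])
  show ?thesis unfolding cls_def
  proof (rule Collect_cong)
    fix w show "vr_conn X d r x w = vr_conn X d r y w"
      using conn_trans[OF xy, of w] conn_trans[OF yx, of w] by blast
  qed
qed

lemma closed_sum:
  assumes ms: "Metric_space X d" and fX: "finite X" and SX: "S \<subseteq> X"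
    and cl: "\<And>y z. y \<in> S \<Longrightarrow> vr_conn X d r y z \<Longrightarrow> z \<in> S"
    and v: "\<And>x. x \<in> X \<Longrightarrow> (\<Sum>y\<in>cls X d r x. v y) = 0"
  shows "(\<Sum>y\<in>S. v y) = (0::bit)"
proof -
  have S: "S = \<Union> (cls X d r ` S)"
  proof
    show "S \<subseteq> \<Union> (cls X d r ` S)"
    proof
      fix y assume "y \<in> S"
      moreover have "y \<in> cls X d r y" unfolding cls_def by (simp add: conn_refl)
      ultimately show "y \<in> \<Union> (cls X d r ` S)" by (rule UN_I)
    qed
    show "\<Union> (cls X d r ` S) \<subseteq> S"
      unfolding cls_def using cl by auto
  qed
  have fS: "finite S" using fX SX by (rule finite_subset[rotated])
  have "(\<Sum>y\<in>\<Union> (cls X d r ` S). v y) = (\<Sum>C\<in>cls X d r ` S. \<Sum>y\<in>C. v y)"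
  proof (subst sum.Union_disjoint)
    show "\<forall>A\<in>cls X d r ` S. finite A"
    proof
      fix A assume "A \<in> cls X d r ` S"
      then obtain y where "y \<in> S" "A = cls X d r y" by blast
      then show "finite A" using cls_subset[of y X d r] SX fX finite_subset by blast
    qed
    show "\<forall>A\<in>cls X d r ` S. \<forall>B\<in>cls X d r ` S. A \<noteq> B \<longrightarrow> A \<inter> B = {}"
    proof (intro ballI impI)
      fix A B assume "A \<in> cls X d r ` S" "B \<in> cls X d r ` S" "A \<noteq> B"
      then obtain y y' where "A = cls X d r y" "B = cls X d r y'" by blast
      then show "A \<inter> B = {}" using cls_eq[OF ms, of _ r y y'] \<open>A \<noteq> B\<close> by blast
    qed
  qed simp
  also have "\<dots> = 0"
  proof (rule sum.neutral, rule ballI)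
    fix C assume "C \<in> cls X d r ` S"
    then obtain y where "y \<in> S" "C = cls X d r y" by blast
    then show "(\<Sum>y\<in>C. v y) = 0" using v SX by blast
  qed
  finally show ?thesis using S by simp
qed

lemma UNIV_bit: "(UNIV :: bit set) = {0, 1}"
  using bit_not_zero_iff by blast

lemma finite_chains0: "finite X \<Longrightarrow> finite (chains0 X)"
proof -
  assume fX: "finite X"
  have "chains0 X \<subseteq> {v. \<forall>x. (x \<in> X \<longrightarrow> v x \<in> (UNIV::bit set)) \<and> (x \<notin> X \<longrightarrow> v x = 0)}"
    unfolding chains0_def by blast
  moreover have "finite {v. \<forall>x. (x \<in> X \<longrightarrow> v x \<in> (UNIV::bit set)) \<and> (x \<notin> X \<longrightarrow> v x = 0)}"
    by (rule finite_set_of_finite_funs[OF fX]) (simp add: UNIV_bit)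
  ultimately show ?thesis by (rule finite_subset)
qed

lemma subspace_chains0: "Z.subspace (chains0 X)"
  unfolding Z.subspace_def chains0_def by (simp add: scaleZ2_def)

lemma subspace_kp: "Z.subspace (ker_plus X d r)"
  unfolding Z.subspace_def kp_char chains0_def
proof (intro conjI ballI allI)
  show "0 \<in> {v \<in> {v. \<forall>x. x \<notin> X \<longrightarrow> v x = 0}. \<forall>x\<in>X. (\<Sum>y\<in>cls X d r x. v y) = 0}"
    by simp
next
  fix v w :: "'a \<Rightarrow> bit" assume v: "v \<in> {v \<in> {v. \<forall>x. x \<notin> X \<longrightarrow> v x = 0}. \<forall>x\<in>X. (\<Sum>y\<in>cls X d r x. v y) = 0}"
    and w: "w \<in> {v \<in> {v. \<forall>x. x \<notin> X \<longrightarrow> v x = 0}. \<forall>x\<in>X. (\<Sum>y\<in>cls X d r x. v y) = 0}"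
  show "v + w \<in> {v \<in> {v. \<forall>x. x \<notin> X \<longrightarrow> v x = 0}. \<forall>x\<in>X. (\<Sum>y\<in>cls X d r x. v y) = 0}"
  proof (intro CollectI conjI allI impI ballI)
    fix x assume "x \<notin> X" then show "(v + w) x = 0" using v w by simp
  next
    fix x assume x: "x \<in> X"
    have "(\<Sum>y\<in>cls X d r x. (v + w) y) = (\<Sum>y\<in>cls X d r x. v y) + (\<Sum>y\<in>cls X d r x. w y)"
      unfolding plus_fun_def by (rule sum.distrib)
    then show "(\<Sum>y\<in>cls X d r x. (v + w) y) = 0" using v w x by simp
  qed
next
  fix c :: bit and v :: "'a \<Rightarrow> bit" assume v: "v \<in> {v \<in> {v. \<forall>x. x \<notin> X \<longrightarrow> v x = 0}. \<forall>x\<in>X. (\<Sum>y\<in>cls X d r x. v y) = 0}"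
  have "(\<Sum>y\<in>cls X d r x. c * v y) = c * (\<Sum>y\<in>cls X d r x. v y)" for x
    by (rule sum_distrib_left[symmetric])
  then show "scaleZ2 c v \<in> {v \<in> {v. \<forall>x. x \<notin> X \<longrightarrow> v x = 0}. \<forall>x\<in>X. (\<Sum>y\<in>cls X d r x. v y) = 0}"
    using v unfolding scaleZ2_def by simp
qed

lemma kp_sub: "ker_plus X d r \<subseteq> chains0 X"
  unfolding ker_plus_def by (rule Collect_restrict)

lemma finite_kp: "finite X \<Longrightarrow> finite (ker_plus X d r)"
  by (rule finite_subset[OF kp_sub finite_chains0])

lemma zero_kp: "0 \<in> ker_plus X d r"
  by (rule Z.subspace_0[OF subspace_kp])

lemma kp_mono:
  assumes ms: "Metric_space X d" and fX: "finite X" and rs: "r \<le> s"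
  shows "ker_plus X d r \<subseteq> ker_plus X d s"
proof
  fix v assume v: "v \<in> ker_plus X d r"
  have vc: "v \<in> chains0 X" and vs: "\<And>x. x \<in> X \<Longrightarrow> (\<Sum>y\<in>cls X d r x. v y) = 0"
    using v unfolding kp_char by auto
  have "(\<Sum>y\<in>cls X d s x. v y) = 0" if x: "x \<in> X" for x
  proof (rule closed_sum[OF ms fX cls_subset[OF x]])
    fix y z assume "y \<in> cls X d s x" "vr_conn X d r y z"
    then have "vr_conn X d s x y" "vr_conn X d s y z"
      using conn_mono[OF rs] unfolding cls_def by auto
    then have "vr_conn X d s x z" by (rule conn_trans)
    then show "z \<in> cls X d s x" unfolding cls_def by simp
  qed (rule vs)
  then show "v \<in> ker_plus X d s" using vc unfolding kp_char by blast
qed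

lemma conn_nonpos:
  assumes ms: "Metric_space X d" and r: "r \<le> 0" and c: "vr_conn X d r x y"
  shows "x = y"
  using c unfolding vr_conn_def
proof (induction rule: rtranclp_induct)
  case base then show ?case by simp
next
  case (step y z)
  then have "y \<in> X" "z \<in> X" "d y z \<le> 0" using r by auto
  then have "d y z = 0" using Metric_space.nonneg[OF ms, of y z] by linarith
  then have "y = z" using Metric_space.zero[OF ms \<open>y \<in> X\<close> \<open>z \<in> X\<close>] by simp
  then show ?case using step.IH by simp
qed

lemma kp_nonpos:
  assumes ms: "Metric_space X d" and r: "r \<le> 0"
  shows "ker_plus X d r = {0}"
proof
  show "ker_plus X d r \<subseteq> {0}"
  proof
    fix v assume v: "v \<in> ker_plus X d r"
    have "cls X d r x = {x}" for x
    proof (rule set_eqI)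
      fix y show "y \<in> cls X d r x \<longleftrightarrow> y \<in> {x}"
        using conn_nonpos[OF ms r, of x y] conn_refl[of X d r x] unfolding cls_def by auto
    qed
    then have "v x = 0" if "x \<in> X" for x using v that unfolding kp_char by auto
    moreover have "v x = 0" if "x \<notin> X" for x using v that unfolding kp_char chains0_def by auto
    ultimately have "v = 0" by (intro ext) (metis zero_fun_def)
    then show "v \<in> {0}" by simp
  qed
qed (simp add: zero_kp)

lemma kp_step:
  assumes "\<And>x y. x \<in> X \<Longrightarrow> y \<in> X \<Longrightarrow> (d x y \<le> r \<longleftrightarrow> d x y \<le> s)"
  shows "ker_plus X d r = ker_plus X d s"
proof -
  have "(\<lambda>x y. x \<in> X \<and> y \<in> X \<and> d x y \<le> r) = (\<lambda>x y. x \<in> X \<and> y \<in> X \<and> d x y \<le> s)"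
    using assms by (auto simp: fun_eq_iff)
  then have "vr_conn X d r = vr_conn X d s" unfolding vr_conn_def by simp
  then show ?thesis unfolding kp_char cls_def by simp
qed

lemma kp_sum:
  assumes ms: "Metric_space X d" and fX: "finite X" and v: "v \<in> ker_plus X d r"
  shows "(\<Sum>x\<in>X. v x) = 0"
proof (rule closed_sum[OF ms fX subset_refl])
  show "\<And>y z. y \<in> X \<Longrightarrow> vr_conn X d r y z \<Longrightarrow> z \<in> X" by (rule conn_mem)
  show "\<And>x. x \<in> X \<Longrightarrow> (\<Sum>y\<in>cls X d r x. v y) = 0" using v unfolding kp_char by simp
qed

lemma kp_top:
  assumes top: "\<And>x y. x \<in> X \<Longrightarrow> y \<in> X \<Longrightarrow> d x y \<le> s"
    and v: "v \<in> chains0 X" and sv: "(\<Sum>x\<in>X. v x) = 0"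
  shows "v \<in> ker_plus X d s"
proof -
  have "cls X d s x = X" if x: "x \<in> X" for x
  proof
    show "cls X d s x \<subseteq> X" by (rule cls_subset[OF x])
    show "X \<subseteq> cls X d s x"
    proof
      fix y assume y: "y \<in> X"
      then have "vr_conn X d s x y" unfolding vr_conn_def using x top[OF x y] by (intro r_into_rtranclp) simp
      then show "y \<in> cls X d s x" unfolding cls_def by simp
    qed
  qed
  then show ?thesis unfolding kp_char using v sv by simp
qed

definition Dset :: "'a set \<Rightarrow> ('a \<Rightarrow> 'a \<Rightarrow> real) \<Rightarrow> real set" where
  "Dset X d = {t. \<exists>x\<in>X. \<exists>y\<in>X. t = d x y \<and> 0 < t}"

definition prevD :: "real set \<Rightarrow> real \<Rightarrow> real" where
  "prevD D b = Max (insert 0 {e\<in>D. e < b})"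

lemma finite_Dset: "finite X \<Longrightarrow> finite (Dset X d)"
proof -
  assume "finite X"
  then have "finite ((\<lambda>(x,y). d x y) ` (X \<times> X))" by simp
  moreover have "Dset X d \<subseteq> (\<lambda>(x,y). d x y) ` (X \<times> X)" unfolding Dset_def by force
  ultimately show ?thesis using finite_subset by blast
qed

lemma prevD_props:
  assumes "finite D" "0 < b"
  shows "0 \<le> prevD D b" "prevD D b < b" "\<And>e. e \<in> D \<Longrightarrow> e < b \<Longrightarrow> e \<le> prevD D b"
proof -
  have f: "finite (insert 0 {e\<in>D. e < b})" using assms by simp
  show "0 \<le> prevD D b" unfolding prevD_def using f by simp
  have "prevD D b \<in> insert 0 {e\<in>D. e < b}" unfolding prevD_def using f by (intro Max_in) auto
  then show "prevD D b < b" using assms by auto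
  show "\<And>e. e \<in> D \<Longrightarrow> e < b \<Longrightarrow> e \<le> prevD D b" unfolding prevD_def using f by simp
qed

lemma km_eq:
  assumes ms: "Metric_space X d" and fX: "finite X" and b: "0 < b"
  shows "ker_minus X d b = ker_plus X d (prevD (Dset X d) b)"
proof -
  let ?p = "prevD (Dset X d) b"
  note P = prevD_props[OF finite_Dset[OF fX, of d] b]
  show ?thesis
  proof
    show "ker_plus X d ?p \<subseteq> ker_minus X d b"
      unfolding ker_minus_def using P(1,2) by auto
    show "ker_minus X d b \<subseteq> ker_plus X d ?p"
    proof
      fix v assume "v \<in> ker_minus X d b"
      then obtain r where r: "0 \<le> r" "r < b" and v: "v \<in> ker_plus X d r"
        unfolding ker_minus_def by auto
      show "v \<in> ker_plus X d ?p"
      proof (cases "r \<le> ?p")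
        case True then show ?thesis using kp_mono[OF ms fX True] v by blast
      next
        case False
        have "ker_plus X d r = ker_plus X d ?p"
        proof (rule kp_step)
          fix x y assume xy: "x \<in> X" "y \<in> X"
          show "d x y \<le> r \<longleftrightarrow> d x y \<le> ?p"
          proof
            assume h: "d x y \<le> r"
            show "d x y \<le> ?p"
            proof (cases "0 < d x y")
              case True
              then have "d x y \<in> Dset X d" unfolding Dset_def using xy by blast
              moreover have "d x y < b" using h r by linarith
              ultimately show ?thesis by (rule P(3))
            next
              case False then show ?thesis using P(1) by linarith
            qed
          next
            assume "d x y \<le> ?p" then show "d x y \<le> r" using False by linarith
          qed
        qed
        then show ?thesis using v by simp
      qed
    qed
  qed
qed

lemma km_notD:
  assumes ms: "Metric_space X d" and fX: "finite X" and b: "0 < b" and nb: "b \<notin> Dset X d"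
  shows "ker_plus X d b = ker_minus X d b"
proof -
  let ?p = "prevD (Dset X d) b"
  note P = prevD_props[OF finite_Dset[OF fX, of d] b]
  have "ker_plus X d b = ker_plus X d ?p"
  proof (rule kp_step)
    fix x y assume xy: "x \<in> X" "y \<in> X"
    show "d x y \<le> b \<longleftrightarrow> d x y \<le> ?p"
    proof
      assume h: "d x y \<le> b"
      show "d x y \<le> ?p"
      proof (cases "0 < d x y")
        case True
        then have "d x y \<in> Dset X d" unfolding Dset_def using xy by blast
        then have "d x y \<noteq> b" using nb by blast
        then show ?thesis using P(3) h \<open>d x y \<in> Dset X d\<close> by simp
      next
        case False then show ?thesis using P(1) by linarith
      qed
    next
      assume "d x y \<le> ?p" then show "d x y \<le> b" using P(2) by linarith
    qed
  qed
  then show ?thesis using km_eq[OF ms fX b] by simp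
qed

lemma telescope:
  fixes g :: "real \<Rightarrow> int"
  assumes "finite D" "\<And>b. b \<in> D \<Longrightarrow> 0 < b"
  shows "(\<Sum>b\<in>D. g b - g (prevD D b)) = g (Max (insert 0 D)) - g 0"
  using assms
proof (induction D rule: finite_linorder_max_induct)
  case empty then show ?case by simp
next
  case (insert m A)
  have m: "0 < m" using insert.prems by simp
  have A: "\<And>b. b \<in> A \<Longrightarrow> 0 < b" using insert.prems by simp
  have mA: "m \<notin> A" using insert.hyps(2) by blast
  have pA: "prevD (insert m A) b = prevD A b" if b: "b \<in> A" for b
  proof -
    have "{e \<in> insert m A. e < b} = {e\<in>A. e < b}" using insert.hyps(2) b by force
    then show ?thesis unfolding prevD_def by simp
  qed
  have pm: "prevD (insert m A) m = Max (insert 0 A)"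
  proof -
    have "{e \<in> insert m A. e < m} = A" using insert.hyps(2) by force
    then show ?thesis unfolding prevD_def by simp
  qed
  have Mx: "Max (insert 0 (insert m A)) = m"
  proof (rule Max_eqI)
    show "finite (insert 0 (insert m A))" using insert.hyps(1) by simp
    show "\<And>y. y \<in> insert 0 (insert m A) \<Longrightarrow> y \<le> m" using insert.hyps(2) m by force
  qed simp
  have "(\<Sum>b\<in>insert m A. g b - g (prevD (insert m A) b)) =
        (g m - g (Max (insert 0 A))) + (\<Sum>b\<in>A. g b - g (prevD (insert m A) b))"
    using insert.hyps(1) mA pm by (simp add: sum.insert)
  also have "(\<Sum>b\<in>A. g b - g (prevD (insert m A) b)) = (\<Sum>b\<in>A. g b - g (prevD A b))"
    using pA by (intro sum.cong) auto
  also have "\<dots> = g (Max (insert 0 A)) - g 0" using insert.IH A by blast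
  finally show ?case using Mx by simp
qed

lemma f0_hom: "module_hom scaleZ2 scaleZ2 (f0 X f)"
  unfolding module_hom_iff
proof (intro conjI allI)
  show "module (scaleZ2 :: bit \<Rightarrow> ('a \<Rightarrow> bit) \<Rightarrow> _)" using vsZ2 module_iff_vector_space by blast
  show "module (scaleZ2 :: bit \<Rightarrow> ('b \<Rightarrow> bit) \<Rightarrow> _)" using vsZ2 module_iff_vector_space by blast
  fix v w :: "'a \<Rightarrow> bit"
  show "f0 X f (v + w) = f0 X f v + f0 X f w"
  proof (rule ext)
    fix z show "f0 X f (v + w) z = (f0 X f v + f0 X f w) z"
      unfolding f0_def plus_fun_def by (rule sum.distrib)
  qed
next
  fix c :: bit and v :: "'a \<Rightarrow> bit"
  show "f0 X f (scaleZ2 c v) = scaleZ2 c (f0 X f v)"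
  proof (rule ext)
    fix z show "f0 X f (scaleZ2 c v) z = scaleZ2 c (f0 X f v) z"
      unfolding f0_def scaleZ2_def by (rule sum_distrib_left[symmetric])
  qed
qed

lemma f0_chains: "f ` X \<subseteq> Z \<Longrightarrow> f0 X f ` S \<subseteq> chains0 Z"
proof
  fix w assume XZ: "f ` X \<subseteq> Z" and "w \<in> f0 X f ` S"
  then obtain v where w: "w = f0 X f v" by blast
  have "w z = 0" if z: "z \<notin> Z" for z
  proof -
    have e: "{x \<in> X. f x = z} = {}" using XZ z by blast
    show ?thesis unfolding w f0_def e by (rule sum.empty)
  qed
  then show "w \<in> chains0 Z" unfolding chains0_def by blast
qed

lemma f0_at:
  assumes "inj_on f X" "x \<in> X"
  shows "f0 X f v (f x) = v x"
proof -
  have "{x' \<in> X. f x' = f x} = {x}" using assms inj_onD by fastforce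
  then show ?thesis unfolding f0_def by simp
qed

lemma f0_inj:
  assumes "inj_on f X"
  shows "inj_on (f0 X f) (chains0 X)"
proof (rule inj_onI)
  fix v w assume v: "v \<in> chains0 X" and w: "w \<in> chains0 X" and e: "f0 X f v = f0 X f w"
  show "v = w"
  proof (rule ext)
    fix x show "v x = w x"
    proof (cases "x \<in> X")
      case True
      then show ?thesis using f0_at[OF assms True, of v] f0_at[OF assms True, of w] e by simp
    next
      case False then show ?thesis using v w unfolding chains0_def by simp
    qed
  qed
qed

lemma f0_sum:
  assumes fX: "finite X" and fZ: "finite Z" and XZ: "f ` X \<subseteq> Z"
  shows "(\<Sum>z\<in>Z. f0 X f v z) = (\<Sum>x\<in>X. v x)"
proof -
  have "(\<Sum>x\<in>X. v x) = (\<Sum>z\<in>f ` X. \<Sum>x\<in>{x\<in>X. f x = z}. v x)"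
    by (rule sum.image_gen[OF fX])
  also have "\<dots> = (\<Sum>z\<in>Z. \<Sum>x\<in>{x\<in>X. f x = z}. v x)"
  proof (rule sum.mono_neutral_left[OF fZ XZ])
    show "\<forall>i\<in>Z - f ` X. (\<Sum>x\<in>{x\<in>X. f x = i}. v x) = 0"
    proof
      fix i assume "i \<in> Z - f ` X"
      then have e: "{x\<in>X. f x = i} = {}" by force
      show "(\<Sum>x\<in>{x\<in>X. f x = i}. v x) = 0" unfolding e by (rule sum.empty)
    qed
  qed
  finally show ?thesis unfolding f0_def by simp
qed

lemma dim_zero: "Z.dim {0 :: 'a \<Rightarrow> bit} = 0"
proof -
  have "Z.dim {0 :: 'a \<Rightarrow> bit} = Z.dim (Z.span ({} :: ('a \<Rightarrow> bit) set))" by simp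
  also have "\<dots> = Z.dim ({} :: ('a \<Rightarrow> bit) set)" by (rule Z.dim_span)
  also have "\<dots> = 0" using Z.dim_eq_card_independent[OF Z.independent_empty] by simp
  finally show ?thesis .
qed

lemma subspace_zero: "Z.subspace {0 :: 'a \<Rightarrow> bit}"
  using Z.subspace_span[of "{}"] Z.span_empty by simp

lemma f0_dim:
  assumes inj: "inj_on f X" and S: "Z.subspace S" and SX: "S \<subseteq> chains0 X"
  shows "Z.dim (f0 X f ` S) = Z.dim S"
proof -
  obtain B where B: "B \<subseteq> S" "Z.independent B" "S \<subseteq> Z.span B" "card B = Z.dim S"
    by (rule Z.basis_exists)
  have spB: "Z.span B = S" using Z.span_subspace[OF B(1) B(3) S] .
  have injS: "inj_on (f0 X f) S" using f0_inj[OF inj] SX inj_on_subset by blast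
  have ind: "Z.independent (f0 X f ` B)"
    using module_hom.independent_injective_image[OF f0_hom B(2)] injS spB by simp
  have sp: "Z.span (f0 X f ` B) = f0 X f ` S"
    using module_hom.span_image[OF f0_hom, of X f B] spB by simp
  have cB: "card (f0 X f ` B) = card B" using card_image inj_on_subset[OF injS B(1)] by blast
  have "Z.dim (f0 X f ` S) = card (f0 X f ` B)"
  proof (rule Z.dim_unique)
    show "f0 X f ` B \<subseteq> f0 X f ` S" using B(1) by (rule image_mono)
    show "f0 X f ` S \<subseteq> Z.span (f0 X f ` B)" using sp by simp
  qed (use ind in auto)
  then show ?thesis using cB B(4) by simp
qed

definition Ph :: "'a set \<Rightarrow> ('a \<Rightarrow> 'a \<Rightarrow> real) \<Rightarrow> 'b set \<Rightarrow> ('b \<Rightarrow> 'b \<Rightarrow> real)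
    \<Rightarrow> ('a \<Rightarrow> 'b) \<Rightarrow> real \<Rightarrow> real \<Rightarrow> int" where
  "Ph X dX Z dZ f r s = int (Z.dim (f0 X f ` ker_plus X dX r \<inter> ker_plus Z dZ s))"

lemma int0L: "(0::'a::zero) \<in> B \<Longrightarrow> {0} \<inter> B = {0}" by blast
lemma int0R: "(0::'a::zero) \<in> A \<Longrightarrow> A \<inter> {0} = {0}" by blast

lemma f0_zero: "f0 X f 0 = 0"
  using module_hom.zero[OF f0_hom] by blast

lemma bar_sub_D:
  assumes ms: "Metric_space X d" and fX: "finite X"
  shows "bar_set X d \<subseteq> Dset X d"
proof
  fix b assume b: "b \<in> bar_set X d"
  then have b0: "0 < b" and bm: "0 < bar_mult X d b" unfolding bar_set_def by auto
  show "b \<in> Dset X d"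
  proof (rule ccontr)
    assume "b \<notin> Dset X d"
    then have "ker_plus X d b = ker_minus X d b" by (rule km_notD[OF ms fX b0])
    then have "bar_mult X d b = 0" unfolding bar_mult_def by simp
    then show False using bm by simp
  qed
qed

lemma finite_bar: "Metric_space X d \<Longrightarrow> finite X \<Longrightarrow> finite (bar_set X d)"
  using bar_sub_D finite_Dset finite_subset by metis

lemma bar_mult_pos:
  assumes ms: "Metric_space X d" and fX: "finite X" and b: "0 < b"
  shows "bar_mult X d b = Z.dim (ker_plus X d b) - Z.dim (ker_plus X d (prevD (Dset X d) b))"
  unfolding bar_mult_def dimZ2_eq using b km_eq[OF ms fX b] by simp

context
  fixes X :: "'a set" and dX :: "'a \<Rightarrow> 'a \<Rightarrow> real"
    and Z :: "'b set" and dZ :: "'b \<Rightarrow> 'b \<Rightarrow> real"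
    and f :: "'a \<Rightarrow> 'b"
  assumes msX: "Metric_space X dX" and fX: "finite X"
    and msZ: "Metric_space Z dZ" and fZ: "finite Z"
    and inj: "inj_on f X" and XZ: "f ` X \<subseteq> Z"
begin

lemma sub_img: "Z.subspace (f0 X f ` ker_plus X dX r)"
  by (rule module_hom.subspace_image[OF f0_hom subspace_kp])

lemma fin_img: "finite (f0 X f ` ker_plus X dX r)"
  by (rule finite_imageI[OF finite_kp[OF fX]])

lemma zero_img: "0 \<in> f0 X f ` ker_plus X dX r"
  using zero_kp f0_zero by (metis image_eqI)

lemma Mf_core:
  assumes a: "0 < a" and b: "0 < b"
  defines "pa \<equiv> prevD (Dset X dX) a" and "pb \<equiv> prevD (Dset Z dZ) b"
  shows "int (Mf X dX Z dZ f a b) = Ph X dX Z dZ f a b - Ph X dX Z dZ f pa b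
            - Ph X dX Z dZ f a pb + Ph X dX Z dZ f pa pb"
    and "Mf X dX Z dZ f a b \<le> bar_mult Z dZ b"
    and "Mf X dX Z dZ f a b \<le> bar_mult X dX a"
proof -
  have kmX: "ker_minus X dX a = ker_plus X dX pa" unfolding pa_def by (rule km_eq[OF msX fX a])
  have kmZ: "ker_minus Z dZ b = ker_plus Z dZ pb" unfolding pb_def by (rule km_eq[OF msZ fZ b])
  have pa: "pa \<le> a" using prevD_props(2)[OF finite_Dset[OF fX, of dX] a] unfolding pa_def by simp
  have pb: "pb \<le> b" using prevD_props(2)[OF finite_Dset[OF fZ, of dZ] b] unfolding pb_def by simp
  have QP: "f0 X f ` ker_plus X dX pa \<subseteq> f0 X f ` ker_plus X dX a"
    by (rule image_mono[OF kp_mono[OF msX fX pa]])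
  have KK: "ker_plus Z dZ pb \<subseteq> ker_plus Z dZ b" by (rule kp_mono[OF msZ fZ pb])
  note C = core[OF sub_img sub_img subspace_kp subspace_kp fin_img finite_kp[OF fZ] QP KK]
  have M: "Mf X dX Z dZ f a b = quot_dim (f0 X f ` ker_plus X dX a \<inter> ker_plus Z dZ b)
     (spanZ2 (f0 X f ` ker_plus X dX pa \<inter> ker_plus Z dZ b \<union> f0 X f ` ker_plus X dX a \<inter> ker_plus Z dZ pb))"
    unfolding Mf_def kmX kmZ ..
  show "int (Mf X dX Z dZ f a b) = Ph X dX Z dZ f a b - Ph X dX Z dZ f pa b
            - Ph X dX Z dZ f a pb + Ph X dX Z dZ f pa pb"
    unfolding M C(1) Ph_def ..
  show "Mf X dX Z dZ f a b \<le> bar_mult Z dZ b"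
    unfolding M bar_mult_pos[OF msZ fZ b] pb_def[symmetric] by (rule C(2))
  have "Z.dim (ker_plus X dX a) = Z.dim (f0 X f ` ker_plus X dX a)"
    using f0_dim[OF inj subspace_kp kp_sub] by simp
  moreover have "Z.dim (ker_plus X dX pa) = Z.dim (f0 X f ` ker_plus X dX pa)"
    using f0_dim[OF inj subspace_kp kp_sub] by simp
  ultimately show "Mf X dX Z dZ f a b \<le> bar_mult X dX a"
    unfolding M bar_mult_pos[OF msX fX a] pa_def[symmetric] using C(3) by simp
qed

lemma Mf_nonpos:
  assumes "a \<le> 0 \<or> b \<le> 0"
  shows "Mf X dX Z dZ f a b = 0"
proof -
  have "f0 X f ` ker_plus X dX a \<inter> ker_plus Z dZ b = {0}"
  proof (cases "a \<le> 0")
    case True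
    then have "ker_plus X dX a = {0}" by (rule kp_nonpos[OF msX])
    then have "f0 X f ` ker_plus X dX a = {0}" using f0_zero[of X f] by simp
    then show ?thesis using int0L[OF zero_kp[of Z dZ b]] by simp
  next
    case False
    then have "b \<le> 0" using assms by simp
    then have "ker_plus Z dZ b = {0}" by (rule kp_nonpos[OF msZ])
    then show ?thesis using int0R[OF zero_img[of a]] by simp
  qed
  then show ?thesis unfolding Mf_def quot_dim_def dimZ2_eq by (simp add: dim_zero)
qed

lemma Mf_out:
  assumes "\<not> (a \<in> bar_set X dX \<and> b \<in> bar_set Z dZ)"
  shows "Mf X dX Z dZ f a b = 0"
proof (cases "a \<le> 0 \<or> b \<le> 0")
  case True then show ?thesis by (rule Mf_nonpos)
next
  case False
  then have a: "0 < a" and b: "0 < b" by auto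
  then have "bar_mult X dX a = 0 \<or> bar_mult Z dZ b = 0" using assms unfolding bar_set_def by auto
  then show ?thesis using Mf_core(2,3)[OF a b] by auto
qed

lemma Ph_zero_right: "Ph X dX Z dZ f r 0 = 0"
proof -
  have "f0 X f ` ker_plus X dX r \<inter> ker_plus Z dZ 0 = {0}"
    using kp_nonpos[OF msZ, of 0] int0R[OF zero_img[of r]] by simp
  then show ?thesis unfolding Ph_def by (simp add: dim_zero)
qed

lemma Ph_zero_left: "Ph X dX Z dZ f 0 s = 0"
proof -
  have "f0 X f ` ker_plus X dX 0 \<inter> ker_plus Z dZ s = {0}"
  proof -
    have "f0 X f ` ker_plus X dX 0 = {0}" using kp_nonpos[OF msX, of 0] f0_zero[of X f] by simp
    then show ?thesis using int0L[OF zero_kp[of Z dZ s]] by simp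
  qed
  then show ?thesis unfolding Ph_def by (simp add: dim_zero)
qed

lemma Ph_top:
  defines "t \<equiv> Max (insert 0 (Dset Z dZ))"
  shows "Ph X dX Z dZ f r t = int (Z.dim (ker_plus X dX r))"
proof -
  have top: "dZ x y \<le> t" if "x \<in> Z" "y \<in> Z" for x y
  proof (cases "0 < dZ x y")
    case True
    then have "dZ x y \<in> Dset Z dZ" unfolding Dset_def using that by blast
    then show ?thesis unfolding t_def using finite_Dset[OF fZ] by simp
  next
    case False
    moreover have "0 \<le> t" unfolding t_def using finite_Dset[OF fZ] by simp
    ultimately show ?thesis by linarith
  qed
  have "f0 X f ` ker_plus X dX r \<subseteq> ker_plus Z dZ t"
  proof
    fix w assume "w \<in> f0 X f ` ker_plus X dX r"
    then obtain v where v: "v \<in> ker_plus X dX r" and w: "w = f0 X f v" by blast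
    show "w \<in> ker_plus Z dZ t"
    proof (rule kp_top)
      show "\<And>x y. x \<in> Z \<Longrightarrow> y \<in> Z \<Longrightarrow> dZ x y \<le> t" by (rule top)
      show "w \<in> chains0 Z" using f0_chains[OF XZ] w by blast
      show "(\<Sum>x\<in>Z. w x) = 0" unfolding w f0_sum[OF fX fZ XZ] by (rule kp_sum[OF msX fX v])
    qed
  qed
  then have "f0 X f ` ker_plus X dX r \<inter> ker_plus Z dZ t = f0 X f ` ker_plus X dX r" by blast
  then show ?thesis unfolding Ph_def using f0_dim[OF inj subspace_kp kp_sub] by simp
qed

lemma conj1:
  assumes a: "a \<in> bar_set X dX"
  shows "(\<Sum>b\<in>bar_set Z dZ. Mf X dX Z dZ f a b) = bar_mult X dX a"
proof -
  have a0: "0 < a" using a unfolding bar_set_def by simp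
  define pa where "pa = prevD (Dset X dX) a"
  define G where "G s = Ph X dX Z dZ f a s - Ph X dX Z dZ f pa s" for s
  have "(\<Sum>b\<in>bar_set Z dZ. Mf X dX Z dZ f a b) = (\<Sum>b\<in>Dset Z dZ. Mf X dX Z dZ f a b)"
  proof (rule sum.mono_neutral_left[OF finite_Dset[OF fZ] bar_sub_D[OF msZ fZ]])
    show "\<forall>i\<in>Dset Z dZ - bar_set Z dZ. Mf X dX Z dZ f a i = 0" using Mf_out by blast
  qed
  then have "int (\<Sum>b\<in>bar_set Z dZ. Mf X dX Z dZ f a b) = (\<Sum>b\<in>Dset Z dZ. int (Mf X dX Z dZ f a b))"
    by simp
  also have "\<dots> = (\<Sum>b\<in>Dset Z dZ. G b - G (prevD (Dset Z dZ) b))"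
  proof (rule sum.cong[OF refl])
    fix b assume "b \<in> Dset Z dZ"
    then have b0: "0 < b" unfolding Dset_def by blast
    show "int (Mf X dX Z dZ f a b) = G b - G (prevD (Dset Z dZ) b)"
      unfolding G_def Mf_core(1)[OF a0 b0] pa_def by simp
  qed
  also have "\<dots> = G (Max (insert 0 (Dset Z dZ))) - G 0"
    by (rule telescope[OF finite_Dset[OF fZ]]) (simp add: Dset_def)
  also have "\<dots> = int (Z.dim (ker_plus X dX a)) - int (Z.dim (ker_plus X dX pa))"
    unfolding G_def Ph_top Ph_zero_right by simp
  also have "\<dots> = int (bar_mult X dX a)"
  proof -
    have "pa \<le> a" using prevD_props(2)[OF finite_Dset[OF fX, of dX] a0] unfolding pa_def by simp
    then have "Z.dim (ker_plus X dX pa) \<le> Z.dim (ker_plus X dX a)"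
      using dim_mono_fin[OF kp_mono[OF msX fX] finite_kp[OF fX]] by blast
    then show ?thesis unfolding bar_mult_pos[OF msX fX a0] pa_def by simp
  qed
  finally show ?thesis by (simp only: of_nat_eq_iff)
qed

lemma conj2:
  assumes b: "b \<in> bar_set Z dZ"
  shows "(\<Sum>a\<in>bar_set X dX. Mf X dX Z dZ f a b) \<le> bar_mult Z dZ b"
proof -
  have b0: "0 < b" using b unfolding bar_set_def by simp
  define pb where "pb = prevD (Dset Z dZ) b"
  define H where "H r = Ph X dX Z dZ f r b - Ph X dX Z dZ f r pb" for r
  have "(\<Sum>a\<in>bar_set X dX. Mf X dX Z dZ f a b) = (\<Sum>a\<in>Dset X dX. Mf X dX Z dZ f a b)"
  proof (rule sum.mono_neutral_left[OF finite_Dset[OF fX] bar_sub_D[OF msX fX]])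
    show "\<forall>i\<in>Dset X dX - bar_set X dX. Mf X dX Z dZ f i b = 0" using Mf_out by blast
  qed
  then have "int (\<Sum>a\<in>bar_set X dX. Mf X dX Z dZ f a b) = (\<Sum>a\<in>Dset X dX. int (Mf X dX Z dZ f a b))"
    by simp
  also have "\<dots> = (\<Sum>a\<in>Dset X dX. H a - H (prevD (Dset X dX) a))"
  proof (rule sum.cong[OF refl])
    fix a assume "a \<in> Dset X dX"
    then have a0: "0 < a" unfolding Dset_def by blast
    show "int (Mf X dX Z dZ f a b) = H a - H (prevD (Dset X dX) a)"
      unfolding H_def Mf_core(1)[OF a0 b0] pb_def by simp
  qed
  also have "\<dots> = H (Max (insert 0 (Dset X dX))) - H 0"
    by (rule telescope[OF finite_Dset[OF fX]]) (simp add: Dset_def)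
  also have "\<dots> \<le> int (bar_mult Z dZ b)"
  proof -
    define t where "t = Max (insert 0 (Dset X dX))"
    have pb: "pb \<le> b" using prevD_props(2)[OF finite_Dset[OF fZ, of dZ] b0] unfolding pb_def by simp
    have KK: "ker_plus Z dZ pb \<subseteq> ker_plus Z dZ b" by (rule kp_mono[OF msZ fZ pb])
    have QP: "{0} \<subseteq> f0 X f ` ker_plus X dX t" using zero_img[of t] by simp
    note C = core[OF sub_img subspace_zero subspace_kp subspace_kp fin_img finite_kp[OF fZ] QP KK]
    have z1: "{0} \<inter> ker_plus Z dZ b = {0}" by (rule int0L[OF zero_kp])
    have z2: "{0} \<inter> ker_plus Z dZ pb = {0}" by (rule int0L[OF zero_kp])
    have "H t = int (quot_dim (f0 X f ` ker_plus X dX t \<inter> ker_plus Z dZ b)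
       (spanZ2 ({0} \<inter> ker_plus Z dZ b \<union> f0 X f ` ker_plus X dX t \<inter> ker_plus Z dZ pb)))"
      using C(1) unfolding H_def Ph_def z1 z2 by (simp add: dim_zero)
    also have "\<dots> \<le> int (bar_mult Z dZ b)"
      using C(2) unfolding bar_mult_pos[OF msZ fZ b0] pb_def by simp
    finally show ?thesis unfolding H_def Ph_zero_left t_def[symmetric] by simp
  qed
  finally show ?thesis by (simp only: of_nat_le_iff)
qed

end

lemma disjoint_family_exists:
  fixes n :: "'i \<Rightarrow> nat" and S :: "'s set"
  assumes fI: "finite I" and fS: "finite S" and le: "(\<Sum>i\<in>I. n i) \<le> card S"
  shows "\<exists>T. (\<forall>i\<in>I. T i \<subseteq> S \<and> card (T i) = n i) \<and> (\<forall>i\<in>I. \<forall>j\<in>I. i \<noteq> j \<longrightarrow> T i \<inter> T j = {})"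
  using fI le
proof (induction I rule: finite_induct)
  case empty
  show ?case by simp
next
  case (insert k I)
  have leI: "(\<Sum>i\<in>I. n i) \<le> card S" using insert.prems insert.hyps by simp
  obtain T where T: "(\<forall>i\<in>I. T i \<subseteq> S \<and> card (T i) = n i) \<and> (\<forall>i\<in>I. \<forall>j\<in>I. i \<noteq> j \<longrightarrow> T i \<inter> T j = {})"
    using insert.IH[OF leI] by (rule exE)
  note T1 = conjunct1[OF T] and T2 = conjunct2[OF T]
  define U where "U = \<Union> (T ` I)"
  have fT: "\<forall>i\<in>I. finite (T i)" using T1 fS finite_subset by meson
  have cU: "card U = (\<Sum>i\<in>I. n i)"
    unfolding U_def using card_UN_disjoint[OF insert.hyps(1) fT T2] T1 by simp
  have US: "U \<subseteq> S" unfolding U_def using T1 by blast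
  have "card (S - U) = card S - card U" using card_Diff_subset[OF finite_subset[OF US fS] US] .
  then have "n k \<le> card (S - U)" using insert.prems insert.hyps cU by simp
  then obtain W where W: "W \<subseteq> S - U" "card W = n k" by (rule obtain_subset_with_card_n)
  define T' where "T' = T(k := W)"
  have A: "\<forall>i\<in>insert k I. T' i \<subseteq> S \<and> card (T' i) = n i"
  proof
    fix i assume i: "i \<in> insert k I"
    show "T' i \<subseteq> S \<and> card (T' i) = n i"
    proof (cases "i = k")
      case True then show ?thesis using W unfolding T'_def by auto
    next
      case False then have "i \<in> I" using i by simp
      then show ?thesis using T1 False unfolding T'_def by simp
    qed
  qed
  have B: "\<forall>i\<in>insert k I. \<forall>j\<in>insert k I. i \<noteq> j \<longrightarrow> T' i \<inter> T' j = {}"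
  proof (intro ballI impI)
    fix i j assume i: "i \<in> insert k I" and j: "j \<in> insert k I" and ij: "i \<noteq> j"
    have kI: "k \<notin> I" using insert.hyps(2) .
    have disjk: "W \<inter> T l = {}" if "l \<in> I" for l
    proof -
      have "T l \<subseteq> U" unfolding U_def using that by blast
      then show ?thesis using W(1) by blast
    qed
    show "T' i \<inter> T' j = {}"
    proof (cases "i = k")
      case True
      then have "j \<in> I" "j \<noteq> k" using j ij by auto
      then show ?thesis using True disjk unfolding T'_def by simp
    next
      case False
      then have iI: "i \<in> I" using i by simp
      show ?thesis
      proof (cases "j = k")
        case True
        then show ?thesis using False iI disjk[OF iI] unfolding T'_def by auto
      next
        case False
        then have "j \<in> I" using j by simp
        then show ?thesis using T2 iI ij \<open>i \<noteq> k\<close> False unfolding T'_def by simp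
      qed
    qed
  qed
  show ?case by (rule exI[where x=T']) (intro conjI A B)
qed

lemma card_block: "card ({a} \<times> {1..(m::nat)}) = m"
  by (simp add: card_cartesian_product)

lemma Rep_iff: "p \<in> Rep S m \<longleftrightarrow> fst p \<in> S \<and> p \<in> {fst p} \<times> {1..m (fst p)}"
  unfolding Rep_def by (cases p) auto

lemma sigma_exists:
  fixes M :: "real \<Rightarrow> real \<Rightarrow> nat" and SX SZ :: "real set" and mX mZ :: "real \<Rightarrow> nat"
  assumes fSX: "finite SX" and fSZ: "finite SZ"
    and h1: "\<forall>a\<in>SX. (\<Sum>b\<in>SZ. M a b) = mX a"
    and h2: "\<forall>b\<in>SZ. (\<Sum>a\<in>SX. M a b) \<le> mZ b"
    and h0: "\<And>a b. \<not> (a \<in> SX \<and> b \<in> SZ) \<Longrightarrow> M a b = 0"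
  shows "\<exists>\<sigma>. inj_on \<sigma> (Rep SX mX) \<and> \<sigma> ` Rep SX mX \<subseteq> Rep SZ mZ
              \<and> (\<forall>a b. card {p \<in> Rep SX mX. fst p = a \<and> fst (\<sigma> p) = b} = M a b)"
proof -
  define BX where "BX a = {a} \<times> {1..mX a}" for a
  define BZ where "BZ b = {b} \<times> {1..mZ b}" for b
  have "\<forall>a\<in>SX. \<exists>T. (\<forall>b\<in>SZ. T b \<subseteq> BX a \<and> card (T b) = M a b) \<and> (\<forall>i\<in>SZ. \<forall>j\<in>SZ. i \<noteq> j \<longrightarrow> T i \<inter> T j = {})"
  proof
    fix a assume a: "a \<in> SX"
    show "\<exists>T. (\<forall>b\<in>SZ. T b \<subseteq> BX a \<and> card (T b) = M a b) \<and> (\<forall>i\<in>SZ. \<forall>j\<in>SZ. i \<noteq> j \<longrightarrow> T i \<inter> T j = {})"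
      by (rule disjoint_family_exists[OF fSZ]) (simp_all add: BX_def card_block h1 a)
  qed
  then obtain Src where Src: "\<forall>a\<in>SX. (\<forall>b\<in>SZ. Src a b \<subseteq> BX a \<and> card (Src a b) = M a b) \<and> (\<forall>i\<in>SZ. \<forall>j\<in>SZ. i \<noteq> j \<longrightarrow> Src a i \<inter> Src a j = {})"
    by (rule bchoice[THEN exE])
  have Src1: "\<And>a b. a \<in> SX \<Longrightarrow> b \<in> SZ \<Longrightarrow> Src a b \<subseteq> BX a \<and> card (Src a b) = M a b"
    using Src by simp
  have Src2: "\<And>a i j. a \<in> SX \<Longrightarrow> i \<in> SZ \<Longrightarrow> j \<in> SZ \<Longrightarrow> i \<noteq> j \<Longrightarrow> Src a i \<inter> Src a j = {}"
    using Src by simp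
  have "\<forall>b\<in>SZ. \<exists>T. (\<forall>a\<in>SX. T a \<subseteq> BZ b \<and> card (T a) = M a b) \<and> (\<forall>i\<in>SX. \<forall>j\<in>SX. i \<noteq> j \<longrightarrow> T i \<inter> T j = {})"
  proof
    fix b assume b: "b \<in> SZ"
    show "\<exists>T. (\<forall>a\<in>SX. T a \<subseteq> BZ b \<and> card (T a) = M a b) \<and> (\<forall>i\<in>SX. \<forall>j\<in>SX. i \<noteq> j \<longrightarrow> T i \<inter> T j = {})"
      by (rule disjoint_family_exists[OF fSX]) (simp_all add: BZ_def card_block h2 b)
  qed
  then obtain Tgt where Tgt: "\<forall>b\<in>SZ. (\<forall>a\<in>SX. Tgt b a \<subseteq> BZ b \<and> card (Tgt b a) = M a b) \<and> (\<forall>i\<in>SX. \<forall>j\<in>SX. i \<noteq> j \<longrightarrow> Tgt b i \<inter> Tgt b j = {})"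
    by (rule bchoice[THEN exE])
  have Tgt1: "\<And>a b. a \<in> SX \<Longrightarrow> b \<in> SZ \<Longrightarrow> Tgt b a \<subseteq> BZ b \<and> card (Tgt b a) = M a b"
    using Tgt by simp
  have Tgt2: "\<And>b i j. b \<in> SZ \<Longrightarrow> i \<in> SX \<Longrightarrow> j \<in> SX \<Longrightarrow> i \<noteq> j \<Longrightarrow> Tgt b i \<inter> Tgt b j = {}"
    using Tgt by simp
  have fBX: "finite (BX a)" for a unfolding BX_def by simp
  have fBZ: "finite (BZ b)" for b unfolding BZ_def by simp
  have "\<forall>ab\<in>SX \<times> SZ. \<exists>g. bij_betw g (Src (fst ab) (snd ab)) (Tgt (snd ab) (fst ab))"
  proof
    fix ab assume ab: "ab \<in> SX \<times> SZ"
    then have a: "fst ab \<in> SX" and b: "snd ab \<in> SZ" by auto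
    show "\<exists>g. bij_betw g (Src (fst ab) (snd ab)) (Tgt (snd ab) (fst ab))"
    proof (rule finite_same_card_bij)
      show "finite (Src (fst ab) (snd ab))" using Src1[OF a b] fBX finite_subset by meson
      show "finite (Tgt (snd ab) (fst ab))" using Tgt1[OF a b] fBZ finite_subset by meson
      show "card (Src (fst ab) (snd ab)) = card (Tgt (snd ab) (fst ab))" using Src1[OF a b] Tgt1[OF a b] by simp
    qed
  qed
  then obtain g0 where g0': "\<forall>ab\<in>SX \<times> SZ. bij_betw (g0 ab) (Src (fst ab) (snd ab)) (Tgt (snd ab) (fst ab))"
    by (rule bchoice[THEN exE])
  define g where "g a b = g0 (a, b)" for a b
  have g: "\<And>a b. a \<in> SX \<Longrightarrow> b \<in> SZ \<Longrightarrow> bij_betw (g a b) (Src a b) (Tgt b a)"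
    unfolding g_def using g0' by simp
  have cover: "BX a = (\<Union>b\<in>SZ. Src a b)" if a: "a \<in> SX" for a
  proof -
    have sub: "(\<Union>b\<in>SZ. Src a b) \<subseteq> BX a" using Src1[OF a] by blast
    have "card (\<Union>b\<in>SZ. Src a b) = (\<Sum>b\<in>SZ. card (Src a b))"
    proof (rule card_UN_disjoint[OF fSZ])
      show "\<forall>i\<in>SZ. finite (Src a i)" using Src1[OF a] fBX finite_subset by meson
      show "\<forall>i\<in>SZ. \<forall>j\<in>SZ. i \<noteq> j \<longrightarrow> Src a i \<inter> Src a j = {}" using Src2[OF a] by blast
    qed
    also have "\<dots> = (\<Sum>b\<in>SZ. M a b)" using Src1[OF a] by simp
    also have "\<dots> = card (BX a)" using h1 a unfolding BX_def by (simp add: card_block)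
    finally show ?thesis using card_subset_eq[OF fBX sub] by simp
  qed
  define \<beta> where "\<beta> p = (SOME b. b \<in> SZ \<and> p \<in> Src (fst p) b)" for p
  have beta: "\<beta> p \<in> SZ \<and> p \<in> Src (fst p) (\<beta> p)" if p: "p \<in> Rep SX mX" for p
  proof -
    have a: "fst p \<in> SX" and pB: "p \<in> BX (fst p)" using p unfolding Rep_iff BX_def by auto
    then have "\<exists>b. b \<in> SZ \<and> p \<in> Src (fst p) b" using cover[OF a] by blast
    then show ?thesis unfolding \<beta>_def by (rule someI_ex)
  qed
  have beta_unique: "\<beta> p = b" if p: "p \<in> Rep SX mX" and b: "b \<in> SZ" and pb: "p \<in> Src (fst p) b" for p b
  proof (rule ccontr)
    assume ne: "\<beta> p \<noteq> b"
    have a: "fst p \<in> SX" using p unfolding Rep_iff by simp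
    have "Src (fst p) (\<beta> p) \<inter> Src (fst p) b = {}" using Src2[OF a _ b ne] beta[OF p] by blast
    then show False using beta[OF p] pb by blast
  qed
  define \<sigma> where "\<sigma> p = g (fst p) (\<beta> p) p" for p
  have sig: "\<sigma> p \<in> Tgt (\<beta> p) (fst p)" if p: "p \<in> Rep SX mX" for p
  proof -
    have a: "fst p \<in> SX" using p unfolding Rep_iff by simp
    show ?thesis unfolding \<sigma>_def
      using bij_betwE[OF g[OF a conjunct1[OF beta[OF p]]]] conjunct2[OF beta[OF p]] by blast
  qed
  have fst_sig: "fst (\<sigma> p) = \<beta> p" if p: "p \<in> Rep SX mX" for p
  proof -
    have a: "fst p \<in> SX" using p unfolding Rep_iff by simp
    have "\<sigma> p \<in> BZ (\<beta> p)" using subsetD[OF conjunct1[OF Tgt1[OF a conjunct1[OF beta[OF p]]]] sig[OF p]] .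
    then show ?thesis unfolding BZ_def by auto
  qed
  have img: "\<sigma> ` Rep SX mX \<subseteq> Rep SZ mZ"
  proof
    fix q assume "q \<in> \<sigma> ` Rep SX mX"
    then obtain p where p: "p \<in> Rep SX mX" and q: "q = \<sigma> p" by blast
    have a: "fst p \<in> SX" using p unfolding Rep_iff by simp
    have "q \<in> BZ (\<beta> p)" unfolding q using subsetD[OF conjunct1[OF Tgt1[OF a conjunct1[OF beta[OF p]]]] sig[OF p]] .
    then show "q \<in> Rep SZ mZ" unfolding BZ_def Rep_iff using beta[OF p] by auto
  qed
  have inj: "inj_on \<sigma> (Rep SX mX)"
  proof (rule inj_onI)
    fix p q assume p: "p \<in> Rep SX mX" and q: "q \<in> Rep SX mX" and e: "\<sigma> p = \<sigma> q"
    have a: "fst p \<in> SX" using p unfolding Rep_iff by simp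
    have a': "fst q \<in> SX" using q unfolding Rep_iff by simp
    have bb: "\<beta> p = \<beta> q" using fst_sig[OF p] fst_sig[OF q] e by simp
    have b: "\<beta> p \<in> SZ" using beta[OF p] by simp
    have aa: "fst p = fst q"
    proof (rule ccontr)
      assume ne: "fst p \<noteq> fst q"
      have D: "Tgt (\<beta> p) (fst p) \<inter> Tgt (\<beta> p) (fst q) = {}" by (rule Tgt2[OF b a a' ne])
      have s1: "\<sigma> p \<in> Tgt (\<beta> p) (fst p)" by (rule sig[OF p])
      have s2: "\<sigma> p \<in> Tgt (\<beta> p) (fst q)" using sig[OF q] bb e by simp
      have "\<sigma> p \<in> Tgt (\<beta> p) (fst p) \<inter> Tgt (\<beta> p) (fst q)" using s1 s2 by (rule IntI)
      then show False unfolding D by simp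
    qed
    have i1: "p \<in> Src (fst p) (\<beta> p)" using beta[OF p] by simp
    have i2: "q \<in> Src (fst p) (\<beta> p)" using beta[OF q] aa bb by simp
    have ge: "g (fst p) (\<beta> p) p = g (fst p) (\<beta> p) q" using e aa bb unfolding \<sigma>_def by simp
    show "p = q" by (rule inj_onD[OF bij_betw_imp_inj_on[OF g[OF a b]] ge i1 i2])
  qed
  have cnt: "card {p \<in> Rep SX mX. fst p = a \<and> fst (\<sigma> p) = b} = M a b" for a b
  proof (cases "a \<in> SX \<and> b \<in> SZ")
    case True
    then have a: "a \<in> SX" and b: "b \<in> SZ" by auto
    have "{p \<in> Rep SX mX. fst p = a \<and> fst (\<sigma> p) = b} = Src a b"
    proof
      show "{p \<in> Rep SX mX. fst p = a \<and> fst (\<sigma> p) = b} \<subseteq> Src a b"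
      proof
        fix p assume "p \<in> {p \<in> Rep SX mX. fst p = a \<and> fst (\<sigma> p) = b}"
        then have p: "p \<in> Rep SX mX" and pa: "fst p = a" and pb: "fst (\<sigma> p) = b" by auto
        have "\<beta> p = b" using fst_sig[OF p] pb by simp
        then show "p \<in> Src a b" using beta[OF p] pa by simp
      qed
      show "Src a b \<subseteq> {p \<in> Rep SX mX. fst p = a \<and> fst (\<sigma> p) = b}"
      proof
        fix p assume p: "p \<in> Src a b"
        have "p \<in> BX a" using Src1[OF a b] p by blast
        then have pa: "fst p = a" and pR: "p \<in> Rep SX mX" unfolding BX_def Rep_iff using a by auto
        have "\<beta> p = b" using beta_unique[OF pR b] p pa by simp
        then show "p \<in> {p \<in> Rep SX mX. fst p = a \<and> fst (\<sigma> p) = b}" using fst_sig[OF pR] pa pR by simp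
      qed
    qed
    then show ?thesis using Src1[OF a b] by simp
  next
    case False
    have "{p \<in> Rep SX mX. fst p = a \<and> fst (\<sigma> p) = b} = {}"
    proof (rule ccontr)
      assume "{p \<in> Rep SX mX. fst p = a \<and> fst (\<sigma> p) = b} \<noteq> {}"
      then obtain p where p: "p \<in> Rep SX mX" and pa: "fst p = a" and pb: "fst (\<sigma> p) = b" by blast
      have "a \<in> SX" using p pa unfolding Rep_iff by simp
      moreover have "b \<in> SZ" using fst_sig[OF p] pb beta[OF p] by simp
      ultimately show False using False by simp
    qed
    then show ?thesis unfolding h0[OF False] by (simp only: card.empty)
  qed
  show ?thesis by (rule exI[where x=\<sigma>]) (intro conjI inj img allI cnt)
qed

theorem proposition4p5:
  fixes X :: "'a set" and dX :: "'a \<Rightarrow> 'a \<Rightarrow> real"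
    and Z :: "'b set" and dZ :: "'b \<Rightarrow> 'b \<Rightarrow> real"
    and f :: "'a \<Rightarrow> 'b"
  assumes "Metric_space X dX" "finite X"
    and "Metric_space Z dZ" "finite Z"
    and "inj_on f X" "f ` X \<subseteq> Z"
  shows "(\<forall>a \<in> bar_set X dX. (\<Sum>b \<in> bar_set Z dZ. Mf X dX Z dZ f a b) = bar_mult X dX a)
       \<and> (\<forall>b \<in> bar_set Z dZ. (\<Sum>a \<in> bar_set X dX. Mf X dX Z dZ f a b) \<le> bar_mult Z dZ b)
       \<and> (\<exists>\<sigma>. inj_on \<sigma> (Rep (bar_set X dX) (bar_mult X dX))
              \<and> \<sigma> ` Rep (bar_set X dX) (bar_mult X dX) \<subseteq> Rep (bar_set Z dZ) (bar_mult Z dZ)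
              \<and> (\<forall>a b. card {p \<in> Rep (bar_set X dX) (bar_mult X dX).
                                fst p = a \<and> fst (\<sigma> p) = b} = Mf X dX Z dZ f a b))"
proof -
  have c1: "\<forall>a \<in> bar_set X dX. (\<Sum>b \<in> bar_set Z dZ. Mf X dX Z dZ f a b) = bar_mult X dX a"
    using conj1[OF assms] by blast
  have c2: "\<forall>b \<in> bar_set Z dZ. (\<Sum>a \<in> bar_set X dX. Mf X dX Z dZ f a b) \<le> bar_mult Z dZ b"
    using conj2[OF assms] by blast
  have c3: "\<exists>\<sigma>. inj_on \<sigma> (Rep (bar_set X dX) (bar_mult X dX))
              \<and> \<sigma> ` Rep (bar_set X dX) (bar_mult X dX) \<subseteq> Rep (bar_set Z dZ) (bar_mult Z dZ)
              \<and> (\<forall>a b. card {p \<in> Rep (bar_set X dX) (bar_mult X dX).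
                                fst p = a \<and> fst (\<sigma> p) = b} = Mf X dX Z dZ f a b)"
    by (rule sigma_exists[OF finite_bar[OF assms(1,2)] finite_bar[OF assms(3,4)] c1 c2 Mf_out[OF assms]])
  show ?thesis using c1 c2 c3 by (intro conjI)
qed

end
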